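(* For all integers $m_1,m_2\geq 1$ and every $\tau\in\mathbb{Z}$, the number \[ n_{(m_1,m_2)}(\tau)=\frac{1}{m_1+m_2}\sum_{d\mid m_1,\ d\mid m_2}\mu(d)\,(-1)^{(m_1+m_2)(\tau+1)/d}\binom{(m_1\tau+m_1)/d-1}{m_1/d}\binom{(m_2\tau+m_2)/d}{m_2/d} \] is an integer. *)

theory Defs
  imports Complex_Main "HOL-Computational_Algebra.Squarefree"
begin

definition moebius_mu :: "nat \<Rightarrow> int" where
  "moebius_mu d = (if squarefree d then (-1) ^ card (prime_factors d) else 0)"

end

theory Submission
  imports Defs "HOL-Number_Theory.Cong"
begin

definition Qp :: "nat \<Rightarrow> nat \<Rightarrow> nat" where
  "Qp p m = (\<Prod>i\<in>{i. i \<le> m \<and> \<not> p dvd i}. i)"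

lemma Qp_0: "Qp p 0 = 1"
  unfolding Qp_def by (simp add: Collect_conv_if)

lemma Qp_Suc: "Qp p (Suc m) = Qp p m * (if p dvd Suc m then 1 else Suc m)"
proof -
  have fin: "finite {i. i \<le> m \<and> \<not> p dvd i}" by simp
  show ?thesis
  proof (cases "p dvd Suc m")
    case True
    then have "{i. i \<le> Suc m \<and> \<not> p dvd i} = {i. i \<le> m \<and> \<not> p dvd i}"
      by (auto simp: le_Suc_eq)
    then show ?thesis using True unfolding Qp_def by simp
  next
    case False
    then have "{i. i \<le> Suc m \<and> \<not> p dvd i} = insert (Suc m) {i. i \<le> m \<and> \<not> p dvd i}"
      by (auto simp: le_Suc_eq)
    then show ?thesis using False fin unfolding Qp_def by (simp add: mult.commute)
  qed
qed

lemma Qp_not_dvd: "prime p \<Longrightarrow> \<not> p dvd Qp p m"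
proof (induction m)
  case 0 then show ?case by (simp add: Qp_0) (metis One_nat_def not_prime_1)
next
  case (Suc m)
  then show ?case by (auto simp: Qp_Suc prime_dvd_mult_iff prime_gt_1_nat)
qed

lemma Qp_coprime: "prime p \<Longrightarrow> coprime (p ^ N) (Qp p m)"
  using Qp_not_dvd by (simp add: prime_imp_coprime coprime_power_left_iff)

lemma fact_Qp: "p > 0 \<Longrightarrow> fact m = Qp p m * p ^ (m div p) * fact (m div p)"
proof (induction m)
  case 0 then show ?case by (simp add: Qp_0)
next
  case (Suc m)
  show ?case
  proof (cases "p dvd Suc m")
    case True
    then obtain c where c: "Suc m = p * c" by blast
    with Suc.prems have c0: "c > 0" by (cases c) auto
    have d1: "Suc m div p = c" using c Suc.prems by simp
    have d2: "m div p = c - 1"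
    proof -
      have "m = p * (c - 1) + (p - 1)" using c c0 Suc.prems
        by (cases c) (auto simp: algebra_simps)
      then show ?thesis using Suc.prems
        by (metis add_cancel_left_right diff_less div_less div_mult_self4
          less_numeral_extra(1) not_gr_zero)
    qed
    have fc: "fact c = c * fact (c - 1)" using c0 by (cases c) auto
    have pc: "p ^ c = p * p ^ (c - 1)" using c0 by (cases c) auto
    have "fact (Suc m) = Suc m * fact m" by simp
    also have "\<dots> = (p * c) * (Qp p m * p ^ (c - 1) * fact (c - 1))" using Suc.IH Suc.prems c d2 by simp
    also have "\<dots> = Qp p (Suc m) * p ^ (Suc m div p) * fact (Suc m div p)"
      using True d1 fc pc by (simp add: Qp_Suc algebra_simps)
    finally show ?thesis .
  next
    case False
    then have d: "Suc m div p = m div p" by (simp add: div_Suc dvd_eq_mod_eq_0)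
    show ?thesis using Suc False d by (simp add: Qp_Suc algebra_simps)
  qed
qed

lemma div_pred_mult: "0 < (p::nat) \<Longrightarrow> 0 < Z \<Longrightarrow> (p * Z - 1) div p = Z - 1"
proof -
  assume p: "0 < p" and Z: "0 < Z"
  have "p * Z - 1 = p * (Z - 1) + (p - 1)" using p Z by (cases Z) (auto simp: algebra_simps)
  then show ?thesis using p
    by (metis add_cancel_left_right diff_less div_less div_mult_self4
          less_numeral_extra(1) not_gr_zero)
qed

lemma Qp_pred: "0 < (p::nat) \<Longrightarrow> 0 < Z \<Longrightarrow> Qp p (p * Z - 1) = Qp p (p * Z)"
proof -
  assume p: "0 < p" and Z: "0 < Z"
  have "p * Z = Suc (p * Z - 1)" using p Z by simp
  then have "Qp p (p * Z) = Qp p (p * Z - 1) * (if p dvd p * Z then 1 else p * Z)"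
    by (metis Qp_Suc)
  then show ?thesis by simp
qed

lemma fact_Qp_pred: "0 < (p::nat) \<Longrightarrow> 0 < Z \<Longrightarrow>
   fact (p * Z - 1) = Qp p (p * Z) * p ^ (Z - 1) * fact (Z - 1)"
  using fact_Qp[of p "p * Z - 1"] div_pred_mult[of p Z] Qp_pred[of p Z] by simp

lemma fact_Qp_mult: "0 < (p::nat) \<Longrightarrow> fact (p * Z) = Qp p (p * Z) * p ^ Z * fact Z"
  using fact_Qp[of p "p * Z"] by simp

lemma cancel6:
  fixes a b c u v fy fz C C0 :: nat
  assumes "c * (u * v) * (fy * fz * C0) = C * (a * u * fy) * (b * v * fz)" "u * v * fy * fz \<noteq> 0"
  shows "C * a * b = C0 * c"
proof -
  have e1: "(u * v * fy * fz) * (C * a * b) = C * (a * u * fy) * (b * v * fz)" by (simp only: ac_simps)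
  have e2: "(u * v * fy * fz) * (C0 * c) = c * (u * v) * (fy * fz * C0)" by (simp only: ac_simps)
  have "(u * v * fy * fz) * (C * a * b) = (u * v * fy * fz) * (C0 * c)"
    using assms(1) e1 e2 by metis
  then show ?thesis using assms(2) by simp
qed

lemma binom_Q:
  assumes p: "0 < (p::nat)" and YX: "Y \<le> X"
  shows "(p * X choose (p * Y)) * Qp p (p * Y) * Qp p (p * (X - Y)) = (X choose Y) * Qp p (p * X)"
proof (rule cancel6)
  have f1: "fact (p * Y) * fact (p * X - p * Y) * (p * X choose (p * Y)) = (fact (p * X) :: nat)"
    using YX by (intro binomial_fact_lemma) simp
  have f2: "fact Y * fact (X - Y) * (X choose Y) = (fact X :: nat)"
    using YX by (intro binomial_fact_lemma)
  have e: "p * X - p * Y = p * (X - Y)" by (simp add: diff_mult_distrib2)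
  have pp: "p ^ Y * p ^ (X - Y) = p ^ X" using YX by (simp add: power_add[symmetric])
  have "Qp p (p * X) * (p ^ Y * p ^ (X - Y)) * (fact Y * fact (X - Y) * (X choose Y)) = fact (p * X)"
    unfolding pp f2 fact_Qp_mult[OF p, of X] by simp
  also have "\<dots> = (p * X choose (p * Y)) * (Qp p (p * Y) * p ^ Y * fact Y) * (Qp p (p * (X - Y)) * p ^ (X - Y) * fact (X - Y))"
    unfolding f1[symmetric] e fact_Qp_mult[OF p, symmetric] by (simp only: ac_simps)
  finally show "Qp p (p * X) * (p ^ Y * p ^ (X - Y)) * (fact Y * fact (X - Y) * (X choose Y)) = (p * X choose (p * Y)) * (Qp p (p * Y) * p ^ Y * fact Y) * (Qp p (p * (X - Y)) * p ^ (X - Y) * fact (X - Y))" .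
  show "p ^ Y * p ^ (X - Y) * fact Y * fact (X - Y) \<noteq> 0" using p by simp
qed

lemma binom_Q':
  assumes p: "0 < (p::nat)" and YX: "Y < X"
  shows "(p * X - 1 choose (p * Y)) * Qp p (p * Y) * Qp p (p * (X - Y)) = (X - 1 choose Y) * Qp p (p * X)"
proof (rule cancel6)
  have le: "p * Y \<le> p * X - 1"
  proof -
    have "p * Y < p * X" using p YX by simp
    then show ?thesis by linarith
  qed
  have f1: "fact (p * Y) * fact (p * X - 1 - p * Y) * (p * X - 1 choose (p * Y)) = (fact (p * X - 1) :: nat)"
    using le by (intro binomial_fact_lemma)
  have f2: "fact Y * fact (X - Y - 1) * (X - 1 choose Y) = (fact (X - 1) :: nat)"
  proof -
    have "fact Y * fact (X - 1 - Y) * (X - 1 choose Y) = (fact (X - 1) :: nat)"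
      using YX by (intro binomial_fact_lemma) simp
    moreover have "X - 1 - Y = X - Y - 1" by simp
    ultimately show ?thesis by simp
  qed
  have e: "p * X - 1 - p * Y = p * (X - Y) - 1" by (simp add: diff_mult_distrib2)
  have pp: "p ^ Y * p ^ (X - Y - 1) = p ^ (X - 1)" using YX by (simp add: power_add[symmetric])
  have XY0: "0 < X - Y" "0 < X" using YX by auto
  have "Qp p (p * X) * (p ^ Y * p ^ (X - Y - 1)) * (fact Y * fact (X - Y - 1) * (X - 1 choose Y)) = fact (p * X - 1)"
    unfolding pp f2 fact_Qp_pred[OF p XY0(2)] by simp
  also have "\<dots> = (p * X - 1 choose (p * Y)) * (Qp p (p * Y) * p ^ Y * fact Y) * (Qp p (p * (X - Y)) * p ^ (X - Y - 1) * fact (X - Y - 1))"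
    unfolding f1[symmetric] e fact_Qp_mult[OF p, symmetric] fact_Qp_pred[OF p XY0(1), symmetric] by (simp only: ac_simps)
  finally show "Qp p (p * X) * (p ^ Y * p ^ (X - Y - 1)) * (fact Y * fact (X - Y - 1) * (X - 1 choose Y)) = (p * X - 1 choose (p * Y)) * (Qp p (p * Y) * p ^ Y * fact Y) * (Qp p (p * (X - Y)) * p ^ (X - Y - 1) * fact (X - Y - 1))" .
  show "p ^ Y * p ^ (X - Y - 1) * fact Y * fact (X - Y - 1) \<noteq> 0" using p by simp
qed

lemma Q_shift:
  assumes pM: "p dvd M"
  shows "[int (Qp p (x + M)) = int (Qp p x) * int (Qp p M)] (mod int M)"
proof (induction x)
  case 0 then show ?case by (simp add: Qp_0)
next
  case (Suc x)
  have iff: "p dvd Suc (x + M) \<longleftrightarrow> p dvd Suc x"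
    using pM by (metis add_Suc dvd_add_left_iff)
  have e1: "Qp p (Suc x + M) = Qp p (x + M) * (if p dvd Suc x then 1 else Suc x + M)"
    using Qp_Suc[of p "x + M"] iff by simp
  have e2: "Qp p (Suc x) = Qp p x * (if p dvd Suc x then 1 else Suc x)"
    by (simp add: Qp_Suc)
  have c: "[int (if p dvd Suc x then 1 else Suc x + M) = int (if p dvd Suc x then 1 else Suc x)] (mod int M)"
  proof -
    have "[int (Suc x) + int M = int (Suc x) + 0] (mod int M)"
      by (intro cong_add cong_refl) (simp add: cong_0_iff)
    then show ?thesis by (simp add: add.assoc)
  qed
  have "[int (Qp p (x + M)) * int (if p dvd Suc x then 1 else Suc x + M)
        = (int (Qp p x) * int (Qp p M)) * int (if p dvd Suc x then 1 else Suc x)] (mod int M)"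
    by (rule cong_mult[OF Suc.IH c])
  then show ?case unfolding e1 e2 by (simp add: ac_simps)
qed

lemma Q_mult:
  assumes pM: "p dvd M"
  shows "[int (Qp p (K * M)) = int (Qp p M) ^ K] (mod int M)"
proof (induction K)
  case 0 then show ?case by (simp add: Qp_0)
next
  case (Suc K)
  have "[int (Qp p (K * M + M)) = int (Qp p (K * M)) * int (Qp p M)] (mod int M)"
    by (rule Q_shift[OF pM])
  moreover have "[int (Qp p (K * M)) * int (Qp p M) = int (Qp p M) ^ K * int (Qp p M)] (mod int M)"
    by (rule cong_scalar_right[OF Suc.IH])
  ultimately show ?case by (simp add: add.commute cong_trans mult.commute)
qed

definition Vp :: "nat \<Rightarrow> nat \<Rightarrow> int" where
  "Vp p y = (\<Prod>i\<in>{i. i < y \<and> \<not> p dvd i}. - int i)"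

lemma Vp_0: "Vp p 0 = 1" by (simp add: Vp_def)

lemma Vp_Suc: "Vp p (Suc y) = Vp p y * (if p dvd y then 1 else - int y)"
proof -
  have fin: "finite {i. i < y \<and> \<not> p dvd i}" by simp
  show ?thesis
  proof (cases "p dvd y")
    case True
    then have "{i. i < Suc y \<and> \<not> p dvd i} = {i. i < y \<and> \<not> p dvd i}"
      by (auto simp: less_Suc_eq)
    then show ?thesis using True unfolding Vp_def by simp
  next
    case False
    then have "{i. i < Suc y \<and> \<not> p dvd i} = insert y {i. i < y \<and> \<not> p dvd i}"
      by (auto simp: less_Suc_eq)
    then show ?thesis using False fin unfolding Vp_def by (simp add: mult.commute)
  qed
qed

lemma Q_refl:
  assumes pM: "p dvd M"
  shows "y \<le> K * M \<Longrightarrow> [int (Qp p (K * M - y)) * Vp p y = int (Qp p (K * M))] (mod int M)"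
proof (induction y)
  case 0 then show ?case by (simp add: Vp_0)
next
  case (Suc y)
  define w where "w = K * M - y"
  have w1: "w = Suc (K * M - Suc y)" using Suc.prems unfolding w_def by simp
  have wy: "w + y = K * M" using Suc.prems unfolding w_def by simp
  have pKM: "p dvd K * M" using pM by simp
  have iff: "p dvd w \<longleftrightarrow> p dvd y" using wy pKM by (metis dvd_add_left_iff dvd_add_right_iff)
  have Qw: "Qp p w = Qp p (K * M - Suc y) * (if p dvd y then 1 else w)"
    using Qp_Suc[of p "K * M - Suc y"] w1 iff by simp
  have IH: "[int (Qp p w) * Vp p y = int (Qp p (K * M))] (mod int M)"
    using Suc.IH Suc.prems unfolding w_def by simp
  have wc: "[int w = - int y] (mod int M)"
  proof -
    have "int w + int y = int K * int M" using wy by (metis of_nat_add of_nat_mult)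
    then have "int w - (- int y) = int M * int K" by (simp add: algebra_simps)
    then show ?thesis by (simp add: cong_iff_dvd_diff)
  qed
  show ?case
  proof (cases "p dvd y")
    case True
    then show ?thesis using IH Qw by (simp add: Vp_Suc)
  next
    case False
    have "[int (Qp p (K * M - Suc y)) * Vp p y * (- int y) = int (Qp p (K * M - Suc y)) * Vp p y * int w] (mod int M)"
      by (rule cong_scalar_left[OF cong_sym[OF wc]])
    then have "[int (Qp p (K * M - Suc y)) * Vp p (Suc y) = int (Qp p w) * Vp p y] (mod int M)"
      using False Qw by (simp add: Vp_Suc ac_simps)
    then show ?thesis using IH by (rule cong_trans)
  qed
qed

lemma card_nondvd:
  assumes p: "0 < (p::nat)"
  shows "card {i. i \<le> y \<and> \<not> p dvd i} = y - y div p"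
proof (induction y)
  case 0 then show ?case by (simp add: Collect_conv_if)
next
  case (Suc y)
  have fin: "finite {i. i \<le> y \<and> \<not> p dvd i}" by simp
  have le: "y div p \<le> y" by simp
  show ?case
  proof (cases "p dvd Suc y")
    case True
    then have "{i. i \<le> Suc y \<and> \<not> p dvd i} = {i. i \<le> y \<and> \<not> p dvd i}"
      by (auto simp: le_Suc_eq)
    moreover have "Suc y div p = Suc (y div p)" using True by (simp add: div_Suc dvd_eq_mod_eq_0)
    ultimately show ?thesis using Suc.IH by simp
  next
    case False
    then have "{i. i \<le> Suc y \<and> \<not> p dvd i} = insert (Suc y) {i. i \<le> y \<and> \<not> p dvd i}"
      by (auto simp: le_Suc_eq)
    moreover have "Suc y div p = y div p" using False by (simp add: div_Suc dvd_eq_mod_eq_0)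
    ultimately show ?thesis using Suc.IH fin le by (simp add: Suc_diff_le)
  qed
qed

lemma Vp_Qp:
  assumes p: "0 < p" and py: "p dvd y"
  shows "Vp p y = (-1) ^ (y - y div p) * int (Qp p y)"
proof -
  have S: "{i. i < y \<and> \<not> p dvd i} = {i. i \<le> y \<and> \<not> p dvd i}"
    using py by (auto simp: order.order_iff_strict)
  have "(\<Prod>i\<in>{i. i \<le> y \<and> \<not> p dvd i}. (-1::int)) * (\<Prod>i\<in>{i. i \<le> y \<and> \<not> p dvd i}. int i)
      = (\<Prod>i\<in>{i. i \<le> y \<and> \<not> p dvd i}. (-1) * int i)"
    by (simp only: prod.distrib[symmetric])
  then have "Vp p y = (-1) ^ card {i. i \<le> y \<and> \<not> p dvd i} * (\<Prod>i\<in>{i. i \<le> y \<and> \<not> p dvd i}. int i)"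
    unfolding Vp_def S by simp
  also have "\<dots> = (-1) ^ (y - y div p) * int (Qp p y)"
    unfolding card_nondvd[OF p] Qp_def by simp
  finally show ?thesis .
qed

lemma refl2:
  assumes p: "0 < p" and pM: "p dvd M" and py: "p dvd y" and yz: "y + z = K * M"
  shows "[int (Qp p z) * int (Qp p y) * (-1) ^ (y - y div p) = int (Qp p M) ^ K] (mod int M)"
proof -
  have "[int (Qp p (K * M - y)) * Vp p y = int (Qp p (K * M))] (mod int M)"
    using yz by (intro Q_refl[OF pM]) simp
  moreover have "K * M - y = z" using yz by simp
  ultimately have "[int (Qp p z) * Vp p y = int (Qp p (K * M))] (mod int M)" by simp
  then have "[int (Qp p z) * int (Qp p y) * (-1) ^ (y - y div p) = int (Qp p (K * M))] (mod int M)"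
    using Vp_Qp[OF p py] by (simp add: ac_simps)
  then show ?thesis using Q_mult[OF pM, of K] by (rule cong_trans)
qed

lemma core_units:
  assumes p: "0 < p" and pM: "p dvd M" and A: "A = p * A'" and B: "B = p * B'" and AB: "A + B = k * M"
    and T: "1 \<le> T"
  shows "[int (Qp p (A * T)) * int (Qp p (B * T))
          = int (Qp p A) * int (Qp p (A * (T - 1))) * int (Qp p B) * int (Qp p (B * (T - 1)))] (mod int M)"
proof -
  define s where "s = (\<lambda>y::nat. ((-1::int) ^ (y - y div p)))"
  define qm where "qm = int (Qp p M)"
  have e: "\<And>Z. p * Z - p * Z div p = (p - 1) * Z" using p by (simp add: diff_mult_distrib)
  have TT: "\<And>Z::nat. Z * T = Z + Z * (T - 1)" using T by (cases T) auto
  have s_mult: "s (A * T) = s A * s (A * (T - 1))"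
  proof -
    have a1: "A * T - A * T div p = (p - 1) * (A' * T)" using e[of "A' * T"] unfolding A by (simp add: ac_simps)
    have a2: "A - A div p = (p - 1) * A'" using e[of A'] unfolding A .
    have a3: "A * (T - 1) - A * (T - 1) div p = (p - 1) * (A' * (T - 1))" using e[of "A' * (T - 1)"] unfolding A by (simp add: ac_simps)
    have "(p - 1) * (A' * T) = (p - 1) * A' + (p - 1) * (A' * (T - 1))"
      using TT[of A'] by (simp add: add_mult_distrib2)
    then show ?thesis unfolding s_def a1 a2 a3 by (simp add: power_add)
  qed
  have s2: "\<And>y. s y * s y = 1" unfolding s_def by (simp flip: power_add)
  have c1: "[int (Qp p (B * T)) * int (Qp p (A * T)) * s (A * T) = qm ^ (k * T)] (mod int M)"
    unfolding s_def qm_def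
  proof (rule refl2[OF p pM])
    show "p dvd A * T" unfolding A by simp
    show "A * T + B * T = k * T * M" using AB by (metis add_mult_distrib mult.commute mult.left_commute)
  qed
  have c2: "[int (Qp p B) * int (Qp p A) * s A = qm ^ k] (mod int M)"
    unfolding s_def qm_def
  proof (rule refl2[OF p pM])
    show "p dvd A" unfolding A by simp
    show "A + B = k * M" by (rule AB)
  qed
  have c3: "[int (Qp p (B * (T - 1))) * int (Qp p (A * (T - 1))) * s (A * (T - 1)) = qm ^ (k * (T - 1))] (mod int M)"
    unfolding s_def qm_def
  proof (rule refl2[OF p pM])
    show "p dvd A * (T - 1)" unfolding A by simp
    show "A * (T - 1) + B * (T - 1) = k * (T - 1) * M" using AB by (metis add_mult_distrib mult.commute mult.left_commute)
  qed
  have kk: "qm ^ (k * T) = qm ^ k * qm ^ (k * (T - 1))"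
    unfolding TT[of k] by (simp add: power_add)
  define X1 where "X1 = int (Qp p (B * T)) * int (Qp p (A * T))"
  define X2 where "X2 = int (Qp p B) * int (Qp p A)"
  define X3 where "X3 = int (Qp p (B * (T - 1))) * int (Qp p (A * (T - 1)))"
  have c23: "[(X2 * s A) * (X3 * s (A * (T - 1))) = qm ^ (k * T)] (mod int M)"
    unfolding kk X2_def X3_def by (rule cong_mult[OF c2 c3])
  have "[X1 * s (A * T) = (X2 * s A) * (X3 * s (A * (T - 1)))] (mod int M)"
    using cong_trans[OF c1[folded X1_def] cong_sym[OF c23]] .
  then have "[X1 * s (A * T) * s (A * T) = (X2 * s A) * (X3 * s (A * (T - 1))) * s (A * T)] (mod int M)"
    by (rule cong_scalar_right)
  moreover have "X1 * s (A * T) * s (A * T) = X1" using s2 by (simp add: mult.assoc)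
  moreover have "(X2 * s A) * (X3 * s (A * (T - 1))) * s (A * T) = X2 * X3"
  proof -
    have "(X2 * s A) * (X3 * s (A * (T - 1))) * s (A * T) = X2 * X3 * (s (A * T) * s (A * T))"
      unfolding s_mult by (simp add: ac_simps)
    also have "\<dots> = X2 * X3" using s2 by simp
    finally show ?thesis .
  qed
  ultimately have "[X1 = X2 * X3] (mod int M)" by metis
  then show ?thesis unfolding X1_def X2_def X3_def by (simp add: ac_simps)
qed

definition fT :: "nat \<Rightarrow> nat \<Rightarrow> nat \<Rightarrow> nat" where
  "fT T a b = (a * T - 1 choose a) * (b * T choose b)"

lemma core_f:
  assumes p: "prime p" and M: "M = p ^ N" and pM: "p dvd M" and A: "A = p * A'" and B: "B = p * B'"
    and A0: "0 < A'" and AB: "A + B = k * M" and T: "2 \<le> T"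
  shows "[int (fT T A B) = int (fT T A' B')] (mod int M)"
proof -
  have p0: "0 < p" using p prime_gt_0_nat by blast
  have T1: "1 \<le> T" using T by simp
  have r1: "p * (A' * T) = A * T" "p * A' = A" "p * (A' * T - A') = A * (T - 1)"
    unfolding A by (simp_all add: diff_mult_distrib2 ac_simps)
  have r2: "p * (B' * T) = B * T" "p * B' = B" "p * (B' * T - B') = B * (T - 1)"
    unfolding B by (simp_all add: diff_mult_distrib2 ac_simps)
  have lt: "A' < A' * T" using A0 T by simp
  have h1: "(A * T - 1 choose A) * Qp p A * Qp p (A * (T - 1)) = (A' * T - 1 choose A') * Qp p (A * T)"
    using binom_Q'[OF p0 lt] unfolding r1 .
  have h2: "(B * T choose B) * Qp p B * Qp p (B * (T - 1)) = (B' * T choose B') * Qp p (B * T)"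
    using binom_Q[OF p0, of B' "B' * T"] T unfolding r2 by simp
  define D where "D = Qp p A * Qp p (A * (T - 1)) * Qp p B * Qp p (B * (T - 1))"
  define Nu where "Nu = Qp p (A * T) * Qp p (B * T)"
  have eq: "fT T A B * D = fT T A' B' * Nu"
  proof -
    have "fT T A B * D = ((A * T - 1 choose A) * Qp p A * Qp p (A * (T - 1))) * ((B * T choose B) * Qp p B * Qp p (B * (T - 1)))"
      unfolding fT_def D_def by (simp add: ac_simps)
    also have "\<dots> = fT T A' B' * Nu" unfolding h1 h2 fT_def Nu_def by (simp add: ac_simps)
    finally show ?thesis .
  qed
  have cu: "[int Nu = int D] (mod int M)"
    using core_units[OF p0 pM A B AB T1] unfolding Nu_def D_def by simp
  have "[int (fT T A B) * int D = int (fT T A' B') * int D] (mod int M)"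
  proof -
    have "int (fT T A B) * int D = int (fT T A' B') * int Nu" using eq by (metis of_nat_mult)
    moreover have "[int (fT T A' B') * int Nu = int (fT T A' B') * int D] (mod int M)"
      by (rule cong_scalar_left[OF cu])
    ultimately show ?thesis by simp
  qed
  moreover have "coprime (int D) (int M)"
  proof -
    have cp: "\<And>m. coprime (Qp p m) p" using Qp_coprime[OF p, of 1] by (simp add: coprime_commute)
    show ?thesis unfolding D_def M by (simp add: cp)
  qed
  ultimately show ?thesis using cong_mult_rcancel by blast
qed

lemma mult_fact_step:
  assumes p: "prime (p::nat)"
  shows "multiplicity p (fact m :: nat) = m div p + multiplicity p (fact (m div p) :: nat)"
proof -
  have p0: "0 < p" using p prime_gt_0_nat by blast
  have Q0: "Qp p m \<noteq> 0" using Qp_not_dvd[OF p, of m] by (metis dvd_0_right)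
  have "multiplicity p (fact m :: nat) = multiplicity p (Qp p m * p ^ (m div p) * fact (m div p))"
    using fact_Qp[OF p0, of m] by simp
  also have "\<dots> = multiplicity p (Qp p m) + multiplicity p (p ^ (m div p)) + multiplicity p (fact (m div p) :: nat)"
    using p Q0 p0 by (simp add: prime_elem_multiplicity_mult_distrib)
  also have "\<dots> = m div p + multiplicity p (fact (m div p) :: nat)"
    using p Qp_not_dvd[OF p, of m] by (simp add: not_dvd_imp_multiplicity_0)
  finally show ?thesis .
qed

lemma mult_fact_levels:
  assumes p: "prime (p::nat)"
  shows "multiplicity p (fact m :: nat) = (\<Sum>i\<in>{1..N}. m div p ^ i) + multiplicity p (fact (m div p ^ N) :: nat)"
proof (induction N)
  case 0 then show ?case by simp
next
  case (Suc N)
  have "multiplicity p (fact (m div p ^ N) :: nat) = m div p ^ Suc N + multiplicity p (fact (m div p ^ Suc N) :: nat)"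
    using mult_fact_step[OF p, of "m div p ^ N"] by (simp add: div_mult2_eq power_Suc2 del: power_Suc)
  then show ?case using Suc.IH by simp
qed

lemma fact_mult_dvd: "(fact a * fact b :: nat) dvd fact (a + b)"
  using binomial_fact_lemma[of a "a + b"] by (metis add_diff_cancel_left' dvd_triv_left le_add1)

lemma mult_binom_ge:
  assumes p: "prime (p::nat)" and km: "k \<le> m"
  shows "(\<Sum>i\<in>{1..N}. (k mod p ^ i + (m - k) mod p ^ i) div p ^ i) \<le> multiplicity p (m choose k)"
proof -
  define F where "F = (\<lambda>x. multiplicity p (fact x :: nat))"
  define z where "z = m - k"
  have mz: "m = k + z" using km unfolding z_def by simp
  have C0: "m choose k \<noteq> 0" using km by simp
  have "F m = F k + F z + multiplicity p (m choose k)"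
  proof -
    have "fact k * fact z * (m choose k) = (fact m :: nat)"
      unfolding z_def using km by (rule binomial_fact_lemma)
    then have "F m = multiplicity p (fact k * fact z * (m choose k) :: nat)" unfolding F_def by simp
    also have "\<dots> = F k + F z + multiplicity p (m choose k)"
      unfolding F_def using p C0 by (simp add: prime_elem_multiplicity_mult_distrib)
    finally show ?thesis .
  qed
  moreover have lev: "\<And>x. F x = (\<Sum>i\<in>{1..N}. x div p ^ i) + F (x div p ^ N)"
    unfolding F_def by (rule mult_fact_levels[OF p])
  moreover have "(\<Sum>i\<in>{1..N}. m div p ^ i) = (\<Sum>i\<in>{1..N}. k div p ^ i) + (\<Sum>i\<in>{1..N}. z div p ^ i)
        + (\<Sum>i\<in>{1..N}. (k mod p ^ i + z mod p ^ i) div p ^ i)"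
  proof -
    have "\<And>i. m div p ^ i = k div p ^ i + z div p ^ i + (k mod p ^ i + z mod p ^ i) div p ^ i"
      unfolding mz by (rule div_add1_eq)
    then show ?thesis by (simp only: sum.distrib)
  qed
  moreover have "F (k div p ^ N) + F (z div p ^ N) \<le> F (m div p ^ N)"
  proof -
    have le: "k div p ^ N + z div p ^ N \<le> m div p ^ N" unfolding mz div_add1_eq[of k z] by simp
    have "(fact (k div p ^ N) * fact (z div p ^ N) :: nat) dvd fact (m div p ^ N)"
      using dvd_trans[OF fact_mult_dvd fact_dvd[OF le]] .
    then have "multiplicity p (fact (k div p ^ N) * fact (z div p ^ N) :: nat) \<le> F (m div p ^ N)"
      unfolding F_def by (intro dvd_imp_multiplicity_le) auto
    then show ?thesis unfolding F_def using p by (simp add: prime_elem_multiplicity_mult_distrib)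
  qed
  ultimately show ?thesis unfolding z_def[symmetric] using lev[of m] lev[of k] lev[of z] by linarith
qed

lemma carry_level:
  assumes q: "0 < (q::nat)" and qab: "q dvd a + b" and qa: "\<not> q dvd a" and T: "2 \<le> T"
  shows "1 \<le> (a mod q + (a * T - 1 - a) mod q) div q + (b mod q + (b * T - b) mod q) div q"
proof -
  define x where "x = a mod q"
  define x' where "x' = b mod q"
  define y where "y = (a * T - 1 - a) mod q"
  define y' where "y' = (b * T - b) mod q"
  have a0: "0 < a" using qa by (cases a) auto
  have xb: "0 < x" "x < q" "x' < q" "y < q" "y' < q" unfolding x_def x'_def y_def y'_def using q qa
    by (auto simp: dvd_eq_mod_eq_0)
  have sx: "x + x' = q"
  proof -
    have "(x + x') mod q = 0" unfolding x_def x'_def using qab by (simp add: mod_add_eq dvd_eq_mod_eq_0)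
    then obtain c where c: "x + x' = q * c" by (metis dvd_eq_mod_eq_0 dvdE)
    have "q * c < q * 2" using c xb by linarith
    then have "c < 2" using q by simp
    moreover have "c \<noteq> 0"
    proof
      assume "c = 0" then show False using c xb by simp
    qed
    ultimately have "c = 1" by linarith
    then show ?thesis using c by simp
  qed
  have sy: "y + 1 + y' = q"
  proof -
    have eqn: "(a * T - 1 - a) + 1 + (b * T - b) = (a + b) * (T - 1)"
    proof -
      have "a * 2 \<le> a * T" using T by simp
      then have "a * T - 1 - a + 1 = a * T - a" using a0 by linarith
      also have "\<dots> = a * (T - 1)" by (simp add: diff_mult_distrib2)
      finally have h1: "a * T - 1 - a + 1 = a * (T - 1)" .
      have h2: "b * T - b = b * (T - 1)" by (simp add: diff_mult_distrib2)
      show ?thesis by (simp only: h1 h2 add_mult_distrib)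
    qed
    have "(y + 1 + y') mod q = ((a * T - 1 - a) + 1 + (b * T - b)) mod q"
      unfolding y_def y'_def by (metis mod_add_eq mod_add_left_eq mod_add_right_eq)
    also have "\<dots> = 0" unfolding eqn using qab by (simp add: dvd_eq_mod_eq_0[symmetric])
    finally have "(y + 1 + y') mod q = 0" .
    then obtain c where c: "y + 1 + y' = q * c" by (metis dvd_eq_mod_eq_0 dvdE)
    have "q * c < q * 2" using c xb by linarith
    then have "c < 2" using q by simp
    moreover have "c \<noteq> 0"
    proof
      assume "c = 0" then show False using c by simp
    qed
    ultimately have "c = 1" by linarith
    then show ?thesis using c by simp
  qed
  have "q \<le> x + y \<or> q \<le> x' + y'" using sx sy by linarith
  then have "1 \<le> (x + y) div q \<or> 1 \<le> (x' + y') div q"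
    using q by (metis div_le_mono div_self less_not_refl2)
  then show ?thesis unfolding x_def x'_def y_def y'_def by linarith
qed

lemma noncore:
  assumes p: "prime (p::nat)" and pN: "p ^ N dvd a + b" and pa: "\<not> p dvd a" and b0: "0 < b" and T: "2 \<le> T"
  shows "p ^ N dvd fT T a b"
proof -
  have a0: "0 < a" using pa by (cases a) auto
  have p0: "0 < p" using p prime_gt_0_nat by blast
  have ka: "a \<le> a * T - 1" using a0 T
  proof -
    have "a * 2 \<le> a * T" using T by simp
    then show ?thesis using a0 by linarith
  qed
  have kb: "b \<le> b * T" using T by auto
  have C1: "(a * T - 1 choose a) \<noteq> 0" using ka binomial_eq_0_iff[of "a * T - 1" a] by linarith
  have C2: "(b * T choose b) \<noteq> 0" using kb binomial_eq_0_iff[of "b * T" b] by linarith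
  have lv: "\<And>i. i \<in> {1..N} \<Longrightarrow> 1 \<le> (a mod p ^ i + (a * T - 1 - a) mod p ^ i) div p ^ i + (b mod p ^ i + (b * T - b) mod p ^ i) div p ^ i"
  proof -
    fix i assume i: "i \<in> {1..N}"
    have i1: "1 \<le> i" "i \<le> N" using i by auto
    have h1: "p ^ i dvd a + b" using dvd_trans[OF le_imp_power_dvd[OF i1(2)] pN] .
    have hp: "p dvd p ^ i" using i1(1) by simp
    have h2: "\<not> p ^ i dvd a"
    proof
      assume "p ^ i dvd a"
      then have "p dvd a" using dvd_trans[OF hp] by simp
      then show False using pa by simp
    qed
    have h0: "0 < p ^ i" using p0 by simp
    show "1 \<le> (a mod p ^ i + (a * T - 1 - a) mod p ^ i) div p ^ i + (b mod p ^ i + (b * T - b) mod p ^ i) div p ^ i"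
      by (rule carry_level[OF h0 h1 h2 T])
  qed
  define G1 where "G1 = (\<lambda>i. (a mod p ^ i + (a * T - 1 - a) mod p ^ i) div p ^ i)"
  define G2 where "G2 = (\<lambda>i. (b mod p ^ i + (b * T - b) mod p ^ i) div p ^ i)"
  have s1: "(\<Sum>i\<in>{1..N}. (1::nat)) \<le> (\<Sum>i\<in>{1..N}. G1 i + G2 i)"
    by (rule sum_mono) (unfold G1_def G2_def, rule lv)
  have s2: "(\<Sum>i\<in>{1..N}. (1::nat)) = N" by simp
  have s3: "(\<Sum>i\<in>{1..N}. G1 i + G2 i) = (\<Sum>i\<in>{1..N}. G1 i) + (\<Sum>i\<in>{1..N}. G2 i)"
    by (rule sum.distrib)
  have m1: "(\<Sum>i\<in>{1..N}. G1 i) \<le> multiplicity p (a * T - 1 choose a)"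
    unfolding G1_def by (rule mult_binom_ge[OF p ka])
  have m2: "(\<Sum>i\<in>{1..N}. G2 i) \<le> multiplicity p (b * T choose b)"
    unfolding G2_def by (rule mult_binom_ge[OF p kb])
  have m3: "multiplicity p (fT T a b) = multiplicity p (a * T - 1 choose a) + multiplicity p (b * T choose b)"
    unfolding fT_def using p C1 C2 by (simp add: prime_elem_multiplicity_mult_distrib)
  have "N \<le> multiplicity p (fT T a b)" using s1 s2 s3 m1 m2 m3 by linarith
  then show ?thesis by (rule multiplicity_dvd')
qed

lemma mu_p_mult:
  assumes p: "prime (p::nat)" and pe: "\<not> p dvd e" and e0: "0 < e"
  shows "moebius_mu (p * e) = - moebius_mu e"
proof -
  have cop: "coprime p e" using p pe by (simp add: prime_imp_coprime)
  have sq: "squarefree (p * e) \<longleftrightarrow> squarefree e"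
    using squarefree_multD(2)[of p e] squarefree_mult_coprime[OF cop squarefree_prime[OF p]] by blast
  have pf: "prime_factors (p * e) = insert p (prime_factors e)"
    using prime_factors_product[of p e] p e0 by (simp add: prime_prime_factors)
  have pn: "p \<notin> prime_factors e" using pe by (auto simp: in_prime_factors_iff)
  have card: "card (prime_factors (p * e)) = Suc (card (prime_factors e))"
    unfolding pf using pn by simp
  show ?thesis unfolding moebius_mu_def sq card by simp
qed

lemma mu_sq:
  assumes p: "prime (p::nat)" and d: "p * p dvd d"
  shows "moebius_mu d = 0"
proof -
  have d2: "p ^ 2 dvd d" using d by (simp add: power2_eq_square)
  have "\<not> p dvd 1" using p by simp (metis One_nat_def not_prime_1)
  then have "\<not> squarefree d" by (rule not_squarefreeI[OF d2])
  then show ?thesis unfolding moebius_mu_def by simp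
qed

definition gT :: "nat \<Rightarrow> nat \<Rightarrow> nat \<Rightarrow> int" where
  "gT T a b = (-1::int) ^ ((a + b) * T) * int (fT T a b)"

lemma neg1_diff_even: "(2::int) dvd (-1) ^ a - (-1) ^ b"
  by (cases "even a"; cases "even b") auto

lemma core_g:
  assumes p: "prime (p::nat)" and pN: "p ^ N dvd A + B" and pA: "p dvd A" and pB: "p dvd B"
    and A0: "0 < A" and T: "2 \<le> T"
  shows "int (p ^ N) dvd gT T A B - gT T (A div p) (B div p)"
proof -
  define A' where "A' = A div p"
  define B' where "B' = B div p"
  have A: "A = p * A'" unfolding A'_def using pA by simp
  have B: "B = p * B'" unfolding B'_def using pB by simp
  have A'0: "0 < A'" using A A0 by (cases A') auto
  define f where "f = int (fT T A B)"
  define f' where "f' = int (fT T A' B')"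
  have hf: "int (p ^ N) dvd f - f'"
  proof (cases "N = 0")
    case True then show ?thesis by simp
  next
    case False
    then have pM: "p dvd p ^ N" by simp
    obtain k where k: "A + B = p ^ N * k" using pN by (elim dvdE)
    have kk: "A + B = k * p ^ N" using k by (simp add: mult.commute)
    have "[int (fT T A B) = int (fT T A' B')] (mod int (p ^ N))"
      by (rule core_f[OF p refl pM A B A'0 kk T])
    then show ?thesis unfolding f_def f'_def by (simp add: cong_iff_dvd_diff)
  qed
  define s1 where "s1 = (-1::int) ^ ((A + B) * T)"
  define s2 where "s2 = (-1::int) ^ ((A' + B') * T)"
  have hs: "int (p ^ N) dvd (s1 - s2) * f'"
  proof (cases "s1 = s2")
    case True then show ?thesis by simp
  next
    case False
    have AB: "(A + B) * T = p * ((A' + B') * T)" unfolding A B by (simp add: algebra_simps)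
    have e1: "s1 = (if even ((A + B) * T) then 1 else -1)" unfolding s1_def by (rule minus_one_power_iff)
    have e2: "s2 = (if even ((A' + B') * T) then 1 else -1)" unfolding s2_def by (rule minus_one_power_iff)
    have par: "even ((A + B) * T) \<noteq> even ((A' + B') * T)"
    proof
      assume h: "even ((A + B) * T) = even ((A' + B') * T)"
      have "s1 = s2" unfolding e1 e2 h ..
      then show False using False by simp
    qed
    have p2: "p = 2"
    proof (rule ccontr)
      assume "p \<noteq> 2"
      then have "p > 2" using prime_ge_2_nat[OF p] by linarith
      then have "odd p" using prime_odd_nat[OF p] by blast
      then have "even ((A + B) * T) = even ((A' + B') * T)" unfolding AB by simp
      then show False using par by simp
    qed
    have odd1: "odd (A' + B')" using par unfolding AB p2 by auto
    have N1: "N \<le> 1"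
    proof (rule ccontr)
      assume "\<not> N \<le> 1"
      then have "(2::nat) ^ 2 dvd 2 ^ N" by (intro le_imp_power_dvd) simp
      then have "(2::nat) ^ 2 dvd 2 * (A' + B')" using pN unfolding A B p2
        by (metis add_mult_distrib2 dvd_trans)
      then have "2 * 2 dvd 2 * (A' + B')" by (simp only: power2_eq_square)
      then have "2 dvd A' + B'" using nat_mult_dvd_cancel1[of 2 2 "A' + B'"] by (simp only: zero_less_numeral simp_thms)
      then show False using odd1 by simp
    qed
    have "p ^ N dvd 2" using N1 p2 by (cases N) auto
    then have "int (p ^ N) dvd 2" by (metis of_nat_dvd_iff of_nat_numeral)
    also have "(2::int) dvd s1 - s2" unfolding s1_def s2_def by (rule neg1_diff_even)
    also have "s1 - s2 dvd (s1 - s2) * f'" by simp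
    finally show ?thesis .
  qed
  have "gT T A B - gT T (A div p) (B div p) = s1 * (f - f') + (s1 - s2) * f'"
    unfolding gT_def s1_def s2_def f_def f'_def A'_def[symmetric] B'_def[symmetric]
    by (simp add: algebra_simps)
  then show ?thesis using hf hs by simp
qed

definition Ssum :: "nat \<Rightarrow> nat \<Rightarrow> nat \<Rightarrow> int" where
  "Ssum T a b = (\<Sum>d\<in>{d. d dvd a \<and> d dvd b}. moebius_mu d * gT T (a div d) (b div d))"

lemma dvd_quot_sum:
  assumes p: "prime (p::nat)" and pN: "p ^ N dvd a + b" and d: "d dvd a" "d dvd b" and pd: "\<not> p dvd d"
  shows "p ^ N dvd a div d + b div d"
proof -
  have "a + b = d * (a div d + b div d)" using d by (simp add: add_mult_distrib2)
  moreover have "coprime (p ^ N) d" using p pd by (simp add: prime_imp_coprime)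
  ultimately show ?thesis using pN by (metis coprime_dvd_mult_right_iff)
qed

lemma keyP:
  assumes p: "prime (p::nat)" and pN: "p ^ N dvd a + b" and a0: "0 < a" and b0: "0 < b" and T: "2 \<le> T"
  shows "int (p ^ N) dvd Ssum T a b"
proof -
  define D where "D = {d. d dvd a \<and> d dvd b}"
  have finD: "finite D" unfolding D_def using a0 by (auto intro: finite_subset[of _ "{..a}"] dest: dvd_imp_le)
  define h where "h = (\<lambda>d. moebius_mu d * gT T (a div d) (b div d))"
  have S: "Ssum T a b = sum h D" unfolding Ssum_def D_def h_def ..
  have D0: "\<And>d. d \<in> D \<Longrightarrow> 0 < d" unfolding D_def using a0 by (auto intro!: Nat.gr0I)
  show ?thesis
  proof (cases "p dvd a \<and> p dvd b")
    case False
    show ?thesis unfolding S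
    proof (rule dvd_sum)
      fix d assume dD: "d \<in> D"
      have dab: "d dvd a" "d dvd b" using dD unfolding D_def by auto
      have "int (p ^ N) dvd gT T (a div d) (b div d)"
      proof (cases "N = 0")
        case True then show ?thesis by simp
      next
        case False
        have "p dvd a + b" using pN False by (metis dvd_power dvd_trans gr0I)
        then have pa: "\<not> p dvd a" using \<open>\<not> (p dvd a \<and> p dvd b)\<close> by (metis dvd_add_right_iff)
        have pd: "\<not> p dvd d" using pa dab dvd_trans by blast
        have q: "p ^ N dvd a div d + b div d" by (rule dvd_quot_sum[OF p pN dab pd])
        have pa': "\<not> p dvd a div d" using pa dab by (metis dvd_mult dvd_mult_div_cancel)
        have b0': "0 < b div d" using dab b0 D0[OF dD] by (metis dvd_div_eq_0_iff gr0I less_numeral_extra(3))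
        have "p ^ N dvd fT T (a div d) (b div d)" by (rule noncore[OF p q pa' b0' T])
        then show ?thesis unfolding gT_def by (metis dvd_mult of_nat_dvd_iff)
      qed
      then show "int (p ^ N) dvd h d" unfolding h_def by simp
    qed
  next
    case True
    then have pa: "p dvd a" and pb: "p dvd b" by auto
    have p0: "0 < p" using p prime_gt_0_nat by blast
    define D1 where "D1 = {d \<in> D. \<not> p dvd d}"
    define D2 where "D2 = {d \<in> D. p dvd d}"
    have split: "sum h D = sum h D1 + sum h D2"
    proof -
      have "D = D1 \<union> D2" "D1 \<inter> D2 = {}" unfolding D1_def D2_def by auto
      moreover have "finite D1" "finite D2" unfolding D1_def D2_def using finD by auto
      ultimately show ?thesis by (simp add: sum.union_disjoint)
    qed
    have img: "(\<lambda>e. p * e) ` D1 \<subseteq> D2"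
    proof
      fix x assume "x \<in> (\<lambda>e. p * e) ` D1"
      then obtain e where e: "e \<in> D1" and x: "x = p * e" by blast
      have ed: "e dvd a" "e dvd b" "\<not> p dvd e" using e unfolding D1_def D_def by auto
      have cop: "coprime p e" using p ed(3) by (simp add: prime_imp_coprime)
      have "p * e dvd a" using divides_mult[OF pa ed(1) cop] .
      moreover have "p * e dvd b" using divides_mult[OF pb ed(2) cop] .
      ultimately show "x \<in> D2" unfolding D2_def D_def x by simp
    qed
    have zero: "\<forall>d \<in> D2 - (\<lambda>e. p * e) ` D1. h d = 0"
    proof
      fix d assume d: "d \<in> D2 - (\<lambda>e. p * e) ` D1"
      then have dD: "d \<in> D" and pd: "p dvd d" and nimg: "d \<notin> (\<lambda>e. p * e) ` D1" unfolding D2_def by auto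
      obtain e where e: "d = p * e" using pd by blast
      have "e dvd d" using e by simp
      then have "e \<in> D" using dD unfolding D_def by (auto intro: dvd_trans)
      moreover have "e \<notin> D1" using nimg e by blast
      ultimately have "p dvd e" unfolding D1_def by auto
      then have "p * p dvd d" using e by simp
      then show "h d = 0" unfolding h_def using mu_sq[OF p] by simp
    qed
    have s2: "sum h D2 = sum h ((\<lambda>e. p * e) ` D1)"
      using finD img zero unfolding D2_def by (intro sum.mono_neutral_right) auto
    also have "\<dots> = sum (\<lambda>e. h (p * e)) D1"
      using p0 by (subst sum.reindex) (auto simp: inj_on_def)
    finally have s2': "sum h D2 = sum (\<lambda>e. h (p * e)) D1" .
    have "Ssum T a b = sum (\<lambda>e. h e + h (p * e)) D1" unfolding S split s2' by (simp add: sum.distrib)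
    also have "int (p ^ N) dvd \<dots>"
    proof (rule dvd_sum)
      fix e assume e: "e \<in> D1"
      have ed: "e dvd a" "e dvd b" "\<not> p dvd e" and eD: "e \<in> D" using e unfolding D1_def D_def by auto
      have e0: "0 < e" using D0[OF eD] .
      define A where "A = a div e"
      define B where "B = b div e"
      have q: "p ^ N dvd A + B" unfolding A_def B_def by (rule dvd_quot_sum[OF p pN ed])
      have pA: "p dvd A"
      proof -
        have "p dvd e * A" using pa ed unfolding A_def by simp
        then show ?thesis using ed(3) p by (simp add: prime_dvd_mult_iff)
      qed
      have pB: "p dvd B"
      proof -
        have "p dvd e * B" using pb ed unfolding B_def by simp
        then show ?thesis using ed(3) p by (simp add: prime_dvd_mult_iff)
      qed
      have A0: "0 < A" unfolding A_def using ed a0 e0 by (metis dvd_div_eq_0_iff gr0I)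
      have mu: "moebius_mu (p * e) = - moebius_mu e" by (rule mu_p_mult[OF p ed(3) e0])
      have dv1: "a div (p * e) = A div p" unfolding A_def by (simp add: div_mult2_eq mult.commute)
      have dv2: "b div (p * e) = B div p" unfolding B_def by (simp add: div_mult2_eq mult.commute)
      have "h e + h (p * e) = moebius_mu e * (gT T A B - gT T (A div p) (B div p))"
        unfolding h_def mu dv1 dv2 A_def B_def by (simp add: algebra_simps)
      moreover have "int (p ^ N) dvd gT T A B - gT T (A div p) (B div p)"
        by (rule core_g[OF p q pA pB A0 T])
      ultimately show "int (p ^ N) dvd h e + h (p * e)" by simp
    qed
    finally show ?thesis .
  qed
qed

lemma mainS:
  assumes a0: "0 < a" and b0: "0 < b" and T: "2 \<le> T"
  shows "int (a + b) dvd Ssum T a b"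
proof (cases "Ssum T a b = 0")
  case True then show ?thesis by simp
next
  case False
  have "a + b dvd nat \<bar>Ssum T a b\<bar>"
  proof (rule multiplicity_le_imp_dvd)
    show "a + b \<noteq> 0" using a0 by simp
    fix P :: nat assume P: "prime P"
    have "P ^ multiplicity P (a + b) dvd a + b" by (rule multiplicity_dvd)
    then have "int (P ^ multiplicity P (a + b)) dvd Ssum T a b" by (rule keyP[OF P _ a0 b0 T])
    then have "P ^ multiplicity P (a + b) dvd nat \<bar>Ssum T a b\<bar>" by simp
    show "multiplicity P (a + b) \<le> multiplicity P (nat \<bar>Ssum T a b\<bar>)"
    proof -
      have nz: "nat \<bar>Ssum T a b\<bar> \<noteq> 0" using False by simp
      have nu: "\<not> is_unit P" using P not_prime_unit by blast
      show ?thesis by (rule multiplicity_geI[OF nz nu \<open>P ^ multiplicity P (a + b) dvd nat \<bar>Ssum T a b\<bar>\<close>])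
    qed
  qed
  then show ?thesis by simp
qed

lemma fT_sym:
  assumes a0: "0 < a" and b0: "0 < b" and T: "1 \<le> T"
  shows "(a * T choose a) * (b * T - 1 choose b) = fT T a b"
proof -
  have h1: "(a * T - a) * (a * T choose a) = a * T * (a * T - 1 choose a)" by (rule binomial_absorb_comp)
  have h2: "(b * T - b) * (b * T choose b) = b * T * (b * T - 1 choose b)" by (rule binomial_absorb_comp)
  have e: "a * T * (b * T - b) = (a * T - a) * (b * T)"
    by (simp add: diff_mult_distrib2 diff_mult_distrib algebra_simps)
  have "(a * T * (b * T)) * ((a * T choose a) * (b * T - 1 choose b))
      = (a * T choose a) * (a * T) * (b * T * (b * T - 1 choose b))" by (simp add: ac_simps)
  also have "\<dots> = (a * T choose a) * (a * T * (b * T - b)) * (b * T choose b)" unfolding h2[symmetric] by (simp add: ac_simps)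
  also have "\<dots> = (a * T choose a) * ((a * T - a) * (b * T)) * (b * T choose b)" unfolding e ..
  also have "\<dots> = ((a * T - a) * (a * T choose a)) * (b * T) * (b * T choose b)" by (simp add: ac_simps)
  also have "\<dots> = (a * T * (b * T)) * fT T a b" unfolding h1 fT_def by (simp add: ac_simps)
  finally show ?thesis using a0 b0 T by simp
qed

lemma powi_m1_diff: "(-1::rat) powi (int m - int n) = (-1) ^ (m + n)"
proof -
  have "(-1::rat) powi (int m + - int n) = (-1) powi (int m) * (-1) powi (- int n)"
    by (rule power_int_add) simp
  then have "(-1::rat) powi (int m - int n) = (-1) powi (int m) * (-1) powi (- int n)"
    by simp
  also have "\<dots> = (-1) ^ m * (-1) ^ n" by (simp add: power_int_minus_one_minus)
  finally show ?thesis by (simp add: power_add)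
qed

definition Tm :: "nat \<Rightarrow> nat \<Rightarrow> int \<Rightarrow> rat" where
  "Tm a b t = (-1::rat) powi (int (a + b) * t) * (of_int (int a * t - 1) gchoose a) * (of_int (int b * t) gchoose b)"

lemma Tm_pos:
  assumes a0: "0 < a" and b0: "0 < b" and t: "2 \<le> t"
  shows "Tm a b t = of_int (gT (nat t) a b)"
proof -
  define T where "T = nat t"
  have tT: "t = int T" unfolding T_def using t by simp
  have aT: "1 \<le> a * T" using a0 t tT by (simp add: Suc_le_eq)
  have x1: "(of_int (int a * t - 1) :: rat) = of_nat (a * T - 1)" unfolding tT using aT by (simp add: of_nat_diff)
  have x2: "(of_int (int b * t) :: rat) = of_nat (b * T)" unfolding tT by simp
  have pw: "int (a + b) * t = int ((a + b) * T)" unfolding tT by simp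
  have c1: "(of_nat (a * T - 1) gchoose a :: rat) = of_nat (a * T - 1 choose a)" by (rule binomial_gbinomial[symmetric])
  have c2: "(of_nat (b * T) gchoose b :: rat) = of_nat (b * T choose b)" by (rule binomial_gbinomial[symmetric])
  show ?thesis unfolding Tm_def gT_def x1 x2 pw T_def[symmetric] fT_def c1 c2 power_int_of_nat
    by simp
qed

lemma Tm_neg:
  assumes a0: "0 < a" and b0: "0 < b" and t: "t \<le> -1"
  shows "Tm a b t = of_int (gT (nat (1 - t)) a b)"
proof -
  define T where "T = nat (1 - t)"
  have tT: "t = 1 - int T" unfolding T_def using t by simp
  have T2: "2 \<le> T" unfolding T_def using t by simp
  have bT: "1 \<le> b * T" using b0 T2 by simp
  have g1: "(of_int (int a * t - 1) gchoose a :: rat) = (-1) ^ a * of_nat (a * T choose a)"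
  proof -
    have "(of_int (int a * t - 1) gchoose a :: rat) = (-1) ^ a * ((of_nat a - of_int (int a * t - 1) - 1) gchoose a)"
      by (rule gbinomial_negated_upper)
    also have "(of_nat a - of_int (int a * t - 1) - 1 :: rat) = of_nat (a * T)" unfolding tT by (simp add: algebra_simps)
    finally have "(of_int (int a * t - 1) gchoose a :: rat) = (-1) ^ a * (of_nat (a * T) gchoose a)" .
    moreover have "(of_nat (a * T) gchoose a :: rat) = of_nat (a * T choose a)" by (rule binomial_gbinomial[symmetric])
    ultimately show ?thesis by (simp only:)
  qed
  have g2: "(of_int (int b * t) gchoose b :: rat) = (-1) ^ b * of_nat (b * T - 1 choose b)"
  proof -
    have "(of_int (int b * t) gchoose b :: rat) = (-1) ^ b * ((of_nat b - of_int (int b * t) - 1) gchoose b)"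
      by (rule gbinomial_negated_upper)
    also have "(of_nat b - of_int (int b * t) - 1 :: rat) = of_nat (b * T - 1)" unfolding tT using bT by (simp add: algebra_simps of_nat_diff)
    finally have "(of_int (int b * t) gchoose b :: rat) = (-1) ^ b * (of_nat (b * T - 1) gchoose b)" .
    moreover have "(of_nat (b * T - 1) gchoose b :: rat) = of_nat (b * T - 1 choose b)" by (rule binomial_gbinomial[symmetric])
    ultimately show ?thesis by (simp only:)
  qed
  have pw: "(-1::rat) powi (int (a + b) * t) = (-1) ^ ((a + b) + (a + b) * T)"
  proof -
    have e: "int (a + b) * t = int (a + b) - int ((a + b) * T)" unfolding tT by (simp add: algebra_simps)
    show ?thesis unfolding e by (rule powi_m1_diff)
  qed
  have sgn: "(-1::rat) ^ ((a + b) + (a + b) * T) * (-1) ^ a * (-1) ^ b = (-1) ^ ((a + b) * T)"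
  proof -
    have "(-1::rat) ^ ((a + b) + (a + b) * T) * (-1) ^ a * (-1) ^ b = (-1) ^ ((a + b) * T) * ((-1) ^ (a + b) * (-1) ^ (a + b))"
      by (simp add: power_add ac_simps)
    also have "(-1::rat) ^ (a + b) * (-1) ^ (a + b) = 1" by (simp flip: power_add)
    finally show ?thesis by simp
  qed
  have "Tm a b t = ((-1::rat) ^ ((a + b) + (a + b) * T) * (-1) ^ a * (-1) ^ b) * of_nat ((a * T choose a) * (b * T - 1 choose b))"
    unfolding Tm_def pw g1 g2 by (simp add: ac_simps)
  also have "\<dots> = (-1) ^ ((a + b) * T) * of_nat (fT T a b)" unfolding sgn fT_sym[OF a0 b0 order.trans[OF one_le_numeral T2]] ..
  finally show ?thesis unfolding gT_def T_def[symmetric] by simp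
qed

lemma Tm_zero:
  assumes a0: "0 < a" and b0: "0 < b" and t: "t = 0 \<or> t = 1"
  shows "Tm a b t = 0"
  using t
proof
  assume t0: "t = 0"
  have "(of_int (int b * t) gchoose b :: rat) = 0"
    unfolding t0 using b0 by (simp add: gbinomial_0_left)
  then show ?thesis unfolding Tm_def by (simp only: mult_zero_right)
next
  assume t1: "t = 1"
  have e: "(of_int (int a * t - 1) :: rat) = of_nat (a - 1)" unfolding t1 using a0 by (simp add: of_nat_diff)
  have "(of_nat (a - 1) gchoose a :: rat) = of_nat (a - 1 choose a)" by (rule binomial_gbinomial[symmetric])
  also have "(a - 1 choose a) = 0" using a0 by simp
  finally have "(of_int (int a * t - 1) gchoose a :: rat) = 0" unfolding e by simp
  then show ?thesis unfolding Tm_def by (simp only: mult_zero_right mult_zero_left)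
qed

lemma final_int:
  assumes "2 \<le> T" "0 < m1" "0 < m2"
  shows "(1 / of_nat (m1 + m2)) * (of_int (Ssum T m1 m2) :: rat) \<in> \<int>"
proof -
  have dv: "int (m1 + m2) dvd Ssum T m1 m2" using assms by (intro mainS) auto
  obtain k where k: "Ssum T m1 m2 = int (m1 + m2) * k" using dv by (elim dvdE)
  have n0: "(of_nat (m1 + m2) :: rat) \<noteq> 0" using assms by simp
  have "(1 / of_nat (m1 + m2)) * (of_int (Ssum T m1 m2) :: rat) = of_int k"
    unfolding k using n0 by simp
  then show ?thesis by simp
qed

theorem theorem4p10:
  fixes m1 m2 :: nat and \<tau> :: int
  assumes "m1 \<ge> 1" and "m2 \<ge> 1"
  shows "(1 / of_nat (m1 + m2)) *
           (\<Sum>d\<in>{d::nat. d dvd m1 \<and> d dvd m2}.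
              of_int (moebius_mu d)
              * ((-1::rat) powi ((int (m1 + m2) * (\<tau> + 1)) div int d))
              * ((of_int ((int m1 * \<tau> + int m1) div int d - 1)) gchoose (m1 div d))
              * ((of_int ((int m2 * \<tau> + int m2) div int d)) gchoose (m2 div d)))
         \<in> (\<int> :: rat set)"
proof -
  define t where "t = \<tau> + 1"
  define D where "D = {d::nat. d dvd m1 \<and> d dvd m2}"
  have m0: "0 < m1" "0 < m2" using assms by auto
  have termeq: "of_int (moebius_mu d)
              * ((-1::rat) powi ((int (m1 + m2) * (\<tau> + 1)) div int d))
              * ((of_int ((int m1 * \<tau> + int m1) div int d - 1)) gchoose (m1 div d))
              * ((of_int ((int m2 * \<tau> + int m2) div int d)) gchoose (m2 div d))
            = of_int (moebius_mu d) * Tm (m1 div d) (m2 div d) t" if dD: "d \<in> D" for d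
  proof -
    have d1: "d dvd m1" and d2: "d dvd m2" using dD unfolding D_def by auto
    have d0: "0 < d" using d1 m0 by (cases d) auto
    obtain a where a: "m1 = d * a" using d1 by (elim dvdE)
    obtain b where b: "m2 = d * b" using d2 by (elim dvdE)
    have ad: "m1 div d = a" "m2 div d = b" using a b d0 by simp_all
    have e1: "(int (m1 + m2) * (\<tau> + 1)) div int d = int (a + b) * t"
    proof -
      have "int (m1 + m2) * (\<tau> + 1) = int d * (int (a + b) * t)" unfolding a b t_def by (simp add: algebra_simps)
      then show ?thesis using d0 by simp
    qed
    have e2: "(int m1 * \<tau> + int m1) div int d = int a * t"
    proof -
      have "int m1 * \<tau> + int m1 = int d * (int a * t)" unfolding a t_def by (simp add: algebra_simps)
      then show ?thesis using d0 by simp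
    qed
    have e3: "(int m2 * \<tau> + int m2) div int d = int b * t"
    proof -
      have "int m2 * \<tau> + int m2 = int d * (int b * t)" unfolding b t_def by (simp add: algebra_simps)
      then show ?thesis using d0 by simp
    qed
    show ?thesis unfolding e1 e2 e3 ad Tm_def by (simp only: mult.assoc)
  qed
  have sum_eq: "(\<Sum>d\<in>D.
              of_int (moebius_mu d)
              * ((-1::rat) powi ((int (m1 + m2) * (\<tau> + 1)) div int d))
              * ((of_int ((int m1 * \<tau> + int m1) div int d - 1)) gchoose (m1 div d))
              * ((of_int ((int m2 * \<tau> + int m2) div int d)) gchoose (m2 div d)))
         = (\<Sum>d\<in>D. of_int (moebius_mu d) * Tm (m1 div d) (m2 div d) t)"
    by (rule sum.cong[OF refl termeq])
  have pos: "0 < m1 div d" "0 < m2 div d" if "d \<in> D" for d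
    using that m0 unfolding D_def by (auto simp: dvd_div_eq_0_iff intro!: Nat.gr0I)
  consider "2 \<le> t" | "t \<le> -1" | "t = 0 \<or> t = 1" by linarith
  then have main: "(1 / of_nat (m1 + m2)) * (\<Sum>d\<in>D. of_int (moebius_mu d) * Tm (m1 div d) (m2 div d) t) \<in> (\<int> :: rat set)"
  proof cases
    case 1
    have "(\<Sum>d\<in>D. of_int (moebius_mu d) * Tm (m1 div d) (m2 div d) t) = (of_int (Ssum (nat t) m1 m2) :: rat)"
      unfolding Ssum_def D_def[symmetric] of_int_sum of_int_mult
      by (rule sum.cong[OF refl]) (simp add: Tm_pos[OF pos(1) pos(2) 1])
    then show ?thesis using final_int[of "nat t" m1 m2] 1 m0 by simp
  next
    case 2
    have "(\<Sum>d\<in>D. of_int (moebius_mu d) * Tm (m1 div d) (m2 div d) t) = (of_int (Ssum (nat (1 - t)) m1 m2) :: rat)"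
      unfolding Ssum_def D_def[symmetric] of_int_sum of_int_mult
      by (rule sum.cong[OF refl]) (simp add: Tm_neg[OF pos(1) pos(2) 2])
    then show ?thesis using final_int[of "nat (1 - t)" m1 m2] 2 m0 by simp
  next
    case 3
    have "(\<Sum>d\<in>D. of_int (moebius_mu d) * Tm (m1 div d) (m2 div d) t) = (0 :: rat)"
      by (rule sum.neutral) (simp add: Tm_zero[OF pos(1) pos(2) 3])
    then show ?thesis by simp
  qed
  have "(1 / of_nat (m1 + m2)) * (\<Sum>d\<in>D.
              of_int (moebius_mu d)
              * ((-1::rat) powi ((int (m1 + m2) * (\<tau> + 1)) div int d))
              * ((of_int ((int m1 * \<tau> + int m1) div int d - 1)) gchoose (m1 div d))
              * ((of_int ((int m2 * \<tau> + int m2) div int d)) gchoose (m2 div d))) \<in> (\<int> :: rat set)"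
    using main by (simp only: sum_eq)
  then show ?thesis by (simp only: D_def)
qed

end
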